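(* For every $y\in[0,1]$, the closure $\overline{R^{-1}(y)}$ of the fiber $R^{-1}(y)$ is a Cantor set of Lebesgue measure zero, and $\overline{R^{-1}(y)}\setminus R^{-1}(y)\subset\mathscr D$ (in particular this remainder is countable).
   Context: Define $\rho$ on binary words: for $b=b_1b_2\dots$, $\rho(b)$ is obtained by deleting every digit $b_n=0$ and replacing every $b_n=1$ by $0$ if $n$ is odd and by $1$ if $n$ is even. For $x\in(0,1]$ let $\beta(x)$ be the unique binary expansion of $x$ with infinitely many $1$'s. Define $R:[0,1]\to[0,1]$ by $R(0)=2/3$ and, for $x\in(0,1]$, $R(x)=\sum_{n\ge1}c_n2^{-n}$ where $c=\rho(\beta(x))$. $\mathscr D$ is the set of dyadic rationals in $[0,1]$. *)

theory Defs
  imports "HOL-Analysis.Analysis" "HOL-Library.Infinite_Set"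
begin

text \<open>Binary words are sequences b :: nat \<Rightarrow> nat indexed from 1 (entry 0 is ignored
  and normalised to 0); digits take values in {0,1}.\<close>

definition binary_word :: "(nat \<Rightarrow> nat) \<Rightarrow> bool" where
  "binary_word b \<longleftrightarrow> b 0 = 0 \<and> (\<forall>n. b n \<in> {0, 1})"

definition beta :: "real \<Rightarrow> nat \<Rightarrow> nat" where
  "beta x = (THE b. binary_word b \<and> infinite {n. n \<ge> 1 \<and> b n = 1}
                 \<and> (\<Sum>n. real (b (Suc n)) / 2 ^ Suc n) = x)"

text \<open>rho on binary words with infinitely many 1's: delete every 0, and replace the 1 at
  position n by 0 if n is odd, by 1 if n is even. The k-th (k \<ge> 1) letter of the output
  comes from the k-th 1 of b, located at position enumerate {n. n\<ge>1 \<and> b n = 1} (k-1).\<close>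
definition rho :: "(nat \<Rightarrow> nat) \<Rightarrow> nat \<Rightarrow> nat" where
  "rho b k = (if k = 0 then 0
              else if even (enumerate {n. n \<ge> 1 \<and> b n = 1} (k - 1)) then 1 else 0)"

definition R :: "real \<Rightarrow> real" where
  "R x = (if x = 0 then 2/3
          else (\<Sum>n. real (rho (beta x) (Suc n)) / 2 ^ Suc n))"

definition dyadics :: "real set" where
  "dyadics = {x. 0 \<le> x \<and> x \<le> 1 \<and> (\<exists>(m::int) (k::nat). x = real_of_int m / 2 ^ k)}"

definition cantor_set :: "'a::topological_space set \<Rightarrow> bool" where
  "cantor_set S \<longleftrightarrow> S \<noteq> {} \<and> compact S \<and> (\<forall>x\<in>S. x islimpt S)
                    \<and> (\<forall>x\<in>S. connected_component_set S x = {x})"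

end

theory Submission
  imports Defs
begin


lemma geo_tail: "(\<lambda>m. 1 / 2 ^ Suc (m + n) :: real) sums (1 / 2^n)"
proof -
  have "(\<lambda>m. (1/2^n) * (1/2::real)^Suc m) sums ((1/2^n) * 1)"
    by (intro sums_mult power_half_series)
  then show ?thesis by (simp add: power_add power_divide field_simps)
qed

lemma tail_bound:
  fixes f :: "nat \<Rightarrow> real"
  assumes "\<And>k. k < K \<Longrightarrow> f k = 0" "\<And>k. \<bar>f k\<bar> \<le> 1 / 2 ^ Suc k"
  shows "summable f" "\<bar>suminf f\<bar> \<le> 1 / 2^K"
proof -
  have s0: "summable (\<lambda>k. 1 / 2 ^ Suc k :: real)"
    using geo_tail[of 0] by (auto simp: sums_iff)
  show sf: "summable f"
    by (rule summable_comparison_test'[OF s0]) (use assms(2) in auto)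
  have "suminf f = (\<Sum>m. f (m + K)) + (\<Sum>i<K. f i)"
    by (rule suminf_split_initial_segment[OF sf])
  also have "(\<Sum>i<K. f i) = 0" using assms(1) by simp
  finally have e: "suminf f = (\<Sum>m. f (m + K))" by simp
  have sa: "summable (\<lambda>m. \<bar>f (m + K)\<bar>)"
    by (rule summable_comparison_test'[OF geo_tail[of K, THEN sums_summable]]) (use assms(2) in auto)
  have "\<bar>\<Sum>m. f (m + K)\<bar> \<le> (\<Sum>m. \<bar>f (m + K)\<bar>)"
    by (rule summable_rabs[OF sa])
  also have "\<dots> \<le> (\<Sum>m. 1 / 2 ^ Suc (m + K))"
    using sa geo_tail[of K] assms(2) by (intro suminf_le) (auto simp: sums_iff)
  also have "\<dots> = 1/2^K" using geo_tail[of K] by (simp add: sums_iff)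
  finally show "\<bar>suminf f\<bar> \<le> 1 / 2^K" using e by simp
qed



definition ones :: "(nat \<Rightarrow> nat) \<Rightarrow> nat set" where
  "ones b = {n. n \<ge> 1 \<and> b n = 1}"

definition psum :: "(nat \<Rightarrow> nat) \<Rightarrow> nat \<Rightarrow> real" where
  "psum b n = (\<Sum>m<n. real (b (Suc m)) / 2 ^ Suc m)"

lemma bw_le1: "binary_word b \<Longrightarrow> b n \<le> 1"
proof -
  assume "binary_word b"
  then have "b n \<in> {0,1}" unfolding binary_word_def by blast
  then show ?thesis by auto
qed

lemma bw_summable: assumes "binary_word b"
  shows "summable (\<lambda>n. real (b (Suc n)) / 2 ^ Suc n)"
proof -
  have "summable (\<lambda>n. 1 / 2 ^ Suc n :: real)" using geo_tail[of 0] by (simp add: sums_iff)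
  then show ?thesis
    by (rule summable_comparison_test') (use bw_le1[OF assms] in \<open>auto simp: divide_simps\<close>)
qed

lemma psum_int: "\<exists>m::int. 2 ^ n * psum b n = of_int m"
proof (induction n)
  case 0 then show ?case by (simp add: psum_def)
next
  case (Suc n)
  then obtain m::int where m: "2 ^ n * psum b n = of_int m" by blast
  have "2 ^ Suc n * psum b (Suc n) = 2 * (2^n * psum b n) + real (b (Suc n))"
    by (simp add: psum_def algebra_simps)
  then show ?case using m by (intro exI[of _ "2 * m + int (b (Suc n))"]) simp
qed

lemma psum_ceiling:
  assumes bw: "binary_word b" and inf: "infinite (ones b)"
    and x: "(\<Sum>n. real (b (Suc n)) / 2 ^ Suc n) = x"
  shows "2 ^ n * psum b n = of_int (\<lceil>2 ^ n * x\<rceil> - 1)"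
proof -
  let ?f = "\<lambda>n. real (b (Suc n)) / 2 ^ Suc n"
  have sf: "summable ?f" by (rule bw_summable[OF bw])
  have split: "x = (\<Sum>m. ?f (m + n)) + psum b n"
    using suminf_split_initial_segment[OF sf, of n] x by (simp add: psum_def)
  have st: "summable (\<lambda>m. ?f (m + n))" using summable_iff_shift[of ?f n] sf by blast
  obtain j where j: "j \<in> ones b" "j > n" using inf
    unfolding infinite_nat_iff_unbounded by blast
  have "0 < (\<Sum>m. ?f (m + n))"
  proof (rule suminf_pos2[OF st, of "j - 1 - n"])
    show "0 \<le> ?f (m + n)" for m by simp
    have "Suc (j - 1 - n + n) = j" using j by auto
    then show "0 < ?f (j - 1 - n + n)" using j by (simp add: ones_def)
  qed
  moreover have "(\<Sum>m. ?f (m + n)) \<le> (\<Sum>m. 1 / 2 ^ Suc (m + n))"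
    using st geo_tail[of n] bw_le1[OF bw]
    by (intro suminf_le) (auto simp: sums_iff divide_simps)
  then have "(\<Sum>m. ?f (m + n)) \<le> 1 / 2^n" using geo_tail[of n] by (simp add: sums_iff)
  ultimately have lo: "psum b n < x" and hi: "x \<le> psum b n + 1 / 2^n" using split by auto
  obtain m::int where m: "2 ^ n * psum b n = of_int m" using psum_int by blast
  have "2 ^ n * psum b n < 2 ^ n * x" using lo by simp
  moreover have "2 ^ n * x \<le> 2 ^ n * psum b n + 1"
    using mult_left_mono[OF hi, of "2^n"] by (simp add: algebra_simps)
  ultimately have "\<lceil>2 ^ n * x\<rceil> = m + 1" using m by (intro ceiling_unique) auto
  then show ?thesis using m by simp
qed

definition beta_pred :: "real \<Rightarrow> (nat \<Rightarrow> nat) \<Rightarrow> bool" where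
  "beta_pred x b \<longleftrightarrow> binary_word b \<and> infinite {n. n \<ge> 1 \<and> b n = 1}
                 \<and> (\<Sum>n. real (b (Suc n)) / 2 ^ Suc n) = x"

lemma beta_pred_digit:
  assumes "beta_pred x b"
  shows "real (b (Suc n)) = of_int (\<lceil>2 ^ Suc n * x\<rceil> - 2 * \<lceil>2 ^ n * x\<rceil> + 1)"
proof -
  have bw: "binary_word b" and inf: "infinite (ones b)"
    and x: "(\<Sum>n. real (b (Suc n)) / 2 ^ Suc n) = x"
    using assms by (auto simp: beta_pred_def ones_def)
  have "psum b (Suc n) = psum b n + real (b (Suc n)) / 2 ^ Suc n" by (simp add: psum_def)
  then have "2 ^ Suc n * psum b (Suc n) = 2 * (2 ^ n * psum b n) + real (b (Suc n))"
    by (simp add: algebra_simps)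
  then show ?thesis
    unfolding psum_ceiling[OF bw inf x] by simp
qed

lemma beta_pred_unique:
  assumes "beta_pred x b" "beta_pred x b'"
  shows "b = b'"
proof
  fix n show "b n = b' n"
  proof (cases n)
    case 0 then show ?thesis using assms by (simp add: beta_pred_def binary_word_def)
  next
    case (Suc m)
    have "real (b (Suc m)) = real (b' (Suc m))"
      using beta_pred_digit[OF assms(1)] beta_pred_digit[OF assms(2)] by simp
    then show ?thesis using Suc by simp
  qed
qed



definition cda :: "real \<Rightarrow> nat \<Rightarrow> int" where
  "cda x n = \<lceil>2 ^ n * x\<rceil> - 1"

definition cd :: "real \<Rightarrow> nat \<Rightarrow> nat" where
  "cd x n = (if n = 0 then 0 else nat (cda x n - 2 * cda x (n - 1)))"

lemma cda_bounds: fixes x :: real and n :: nat shows "of_int (cda x n) < 2 ^ n * x" "2 ^ n * x \<le> of_int (cda x n) + 1"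
  unfolding cda_def by (simp_all add: ceiling_correct)

lemma cda_step: fixes x :: real and n :: nat shows "2 * cda x n \<le> cda x (Suc n)" "cda x (Suc n) \<le> 2 * cda x n + 1"
proof -
  have e: "2 ^ Suc n * x = 2 * (2 ^ n * x)" by simp
  have "real_of_int (2 * cda x n) < of_int (cda x (Suc n)) + 1"
    using cda_bounds[where x=x and n=n] cda_bounds[where x=x and n="Suc n"] unfolding e by simp
  then show "2 * cda x n \<le> cda x (Suc n)" by linarith
  have "real_of_int (cda x (Suc n)) < of_int (2 * cda x n + 2)"
    using cda_bounds[where x=x and n=n] cda_bounds[where x=x and n="Suc n"] unfolding e by simp
  then show "cda x (Suc n) \<le> 2 * cda x n + 1" by linarith
qed

lemma cd_Suc: fixes x :: real and n :: nat shows "int (cd x (Suc n)) = cda x (Suc n) - 2 * cda x n"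
  using cda_step[where x=x and n=n] by (simp add: cd_def)

lemma cd_bw: "binary_word (cd x)"
  unfolding binary_word_def
proof (intro conjI allI)
  show "cd x 0 = 0" by (simp add: cd_def)
  fix n show "cd x n \<in> {0,1}"
  proof (cases n)
    case 0 then show ?thesis by (simp add: cd_def)
  next
    case (Suc m)
    have "int (cd x n) \<le> 1" using cd_Suc[where x=x and n=m] cda_step[where x=x and n=m] Suc by simp
    then show ?thesis by auto
  qed
qed

lemma psum_cd:
  assumes "0 < x" "x \<le> 1"
  shows "psum (cd x) n = of_int (cda x n) / 2 ^ n"
proof (induction n)
  case 0
  have "\<lceil>x\<rceil> = 1" using assms by (intro ceiling_unique) auto
  then show ?case by (simp add: psum_def cda_def)
next
  case (Suc n)
  have "psum (cd x) (Suc n) = psum (cd x) n + real (cd x (Suc n)) / 2 ^ Suc n"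
    by (simp add: psum_def)
  also have "real (cd x (Suc n)) = of_int (cda x (Suc n)) - 2 * of_int (cda x n)"
  proof -
    have "real_of_int (int (cd x (Suc n))) = real_of_int (cda x (Suc n) - 2 * cda x n)"
      using cd_Suc[where x=x and n=n] by simp
    then show ?thesis by simp
  qed
  finally show ?case using Suc by (simp add: field_simps)
qed

lemma psum_cd_lim:
  assumes "0 < x" "x \<le> 1"
  shows "psum (cd x) \<longlonglongrightarrow> x"
proof -
  have b: "norm (psum (cd x) n - x) \<le> 1 / 2 ^ n" for n
  proof -
    have a: "\<bar>of_int (cda x n) - 2 ^ n * x\<bar> \<le> 1" using cda_bounds[where x=x and n=n] by linarith
    have "psum (cd x) n - x = (of_int (cda x n) - 2 ^ n * x) / 2^n"
      using psum_cd[OF assms, of n] by (simp add: field_simps)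
    also have "\<bar>\<dots>\<bar> = \<bar>of_int (cda x n) - 2 ^ n * x\<bar> / 2^n" by simp
    also have "\<dots> \<le> 1 / 2^n" using a by (intro divide_right_mono) auto
    finally show ?thesis by simp
  qed
  have z: "(\<lambda>n. 1 / 2 ^ n :: real) \<longlonglongrightarrow> 0"
    by (rule LIMSEQ_divide_realpow_zero) auto
  have "(\<lambda>n. psum (cd x) n - x) \<longlonglongrightarrow> 0"
    by (rule Lim_null_comparison[OF _ z]) (use b in auto)
  then show ?thesis by (simp add: Lim_null[symmetric])
qed

lemma beta_pred_cd:
  assumes "0 < x" "x \<le> 1"
  shows "beta_pred x (cd x)"
proof -
  have sums: "(\<lambda>n. real (cd x (Suc n)) / 2 ^ Suc n) sums x"
    unfolding sums_def using psum_cd_lim[OF assms] by (simp add: psum_def[abs_def])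
  have inf: "infinite {n. n \<ge> 1 \<and> cd x n = 1}"
  proof
    assume "finite {n. n \<ge> 1 \<and> cd x n = 1}"
    then obtain N where N0: "\<forall>n\<in>{n. n \<ge> 1 \<and> cd x n = 1}. n < N"
      unfolding finite_nat_set_iff_bounded by blast
    have N: "\<not> (n \<ge> 1 \<and> cd x n = 1)" if "n > N" for n
    proof
      assume "n \<ge> 1 \<and> cd x n = 1"
      with N0 have "n < N" by blast
      with that show False by simp
    qed
    have z: "cd x n = 0" if "n > N" for n
    proof -
      have "cd x n \<in> {0,1}" using cd_bw[of x] unfolding binary_word_def by blast
      then show ?thesis using N[OF that] that by auto
    qed
    have c: "psum (cd x) (m + Suc N) = psum (cd x) (Suc N)" for m
    proof (induction m)
      case (Suc m)
      have "psum (cd x) (Suc m + Suc N) = psum (cd x) (m + Suc N) + real (cd x (Suc (m + Suc N))) / 2 ^ Suc (m + Suc N)"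
        by (simp add: psum_def)
      then show ?case using Suc z[of "Suc (m + Suc N)"] by simp
    qed simp
    have "(\<lambda>m. psum (cd x) (m + Suc N)) \<longlonglongrightarrow> x"
      using LIMSEQ_ignore_initial_segment[OF psum_cd_lim[OF assms]] .
    then have "psum (cd x) (Suc N) = x" unfolding c by (simp add: LIMSEQ_const_iff)
    moreover have "psum (cd x) (Suc N) < x"
      using psum_cd[OF assms, of "Suc N"] cda_bounds(1)[where x=x and n="Suc N"]
      by (simp add: divide_less_eq mult.commute)
    ultimately show False by simp
  qed
  show ?thesis unfolding beta_pred_def using cd_bw sums inf by (simp add: sums_iff)
qed

lemma beta_eq:
  assumes "beta_pred x b"
  shows "beta x = b"
  unfolding beta_def beta_pred_def[symmetric]
  using assms beta_pred_unique by blast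

lemma beta_pred_beta:
  assumes "0 < x" "x \<le> 1"
  shows "beta_pred x (beta x)"
  using beta_eq[OF beta_pred_cd[OF assms]] beta_pred_cd[OF assms] by simp

lemma beta_digit:
  assumes "0 < x" "x \<le> 1"
  shows "real (beta x (Suc n)) = of_int (\<lceil>2 ^ Suc n * x\<rceil> - 2 * \<lceil>2 ^ n * x\<rceil> + 1)"
  by (rule beta_pred_digit[OF beta_pred_beta[OF assms]])



definition val :: "(nat \<Rightarrow> nat) \<Rightarrow> real" where
  "val g = (\<Sum>k. 1 / 2 ^ g k)"

definition Rv :: "(nat \<Rightarrow> nat) \<Rightarrow> real" where
  "Rv g = (\<Sum>k. (if even (g k) then 1 else 0) / 2 ^ Suc k)"

definition pos :: "real \<Rightarrow> nat \<Rightarrow> nat" where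
  "pos x = enumerate (ones (beta x))"

definition adm :: "(nat \<Rightarrow> nat) \<Rightarrow> bool" where
  "adm g \<longleftrightarrow> strict_mono g \<and> g 0 \<ge> 1"

lemma adm_ge: assumes "adm g" shows "g k \<ge> Suc k"
proof (induction k)
  case 0 then show ?case using assms by (simp add: adm_def)
next
  case (Suc k)
  have "g k < g (Suc k)" using assms by (simp add: adm_def strict_mono_def)
  then show ?case using Suc by simp
qed

lemma inv_pow_mono: "m \<le> n \<Longrightarrow> 1 / 2 ^ n \<le> (1::real) / 2 ^ m"
  by (rule divide_left_mono) (auto intro: power_increasing)

lemma geo_sum1: "(\<lambda>k. 1 / 2 ^ Suc k :: real) sums 1"
  using geo_tail[of 0] by simp

lemma adm_le: assumes "adm g" shows "1 / 2 ^ g n \<le> (1::real) / 2 ^ Suc n"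
  by (rule inv_pow_mono[OF adm_ge[OF assms]])

lemma adm_summable: assumes "adm g" shows "summable (\<lambda>k. 1 / 2 ^ g k :: real)"
  by (rule summable_comparison_test'[OF geo_sum1[THEN sums_summable]])
     (use adm_le[OF assms] in auto)

lemma Rv_summable: "summable (\<lambda>k. (if even (g k) then 1 else 0) / 2 ^ Suc k :: real)"
  by (rule summable_comparison_test'[OF geo_sum1[THEN sums_summable]]) auto

lemma Rv_bounds: "0 \<le> Rv g" "Rv g \<le> 1"
proof -
  show "0 \<le> Rv g" unfolding Rv_def by (rule suminf_nonneg[OF Rv_summable]) auto
  have "Rv g \<le> (\<Sum>k. 1 / 2 ^ Suc k)" unfolding Rv_def
    by (rule suminf_le[OF _ Rv_summable geo_sum1[THEN sums_summable]]) auto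
  then show "Rv g \<le> 1" using geo_sum1 by (simp add: sums_iff)
qed

lemma val_bounds: assumes "adm g" shows "0 < val g" "val g \<le> 1"
proof -
  show "0 < val g" unfolding val_def
    by (rule suminf_pos2[OF adm_summable[OF assms], of 0]) auto
  have "val g \<le> (\<Sum>k. 1 / 2 ^ Suc k)" unfolding val_def
    by (rule suminf_le[OF _ adm_summable[OF assms] geo_sum1[THEN sums_summable]])
       (use adm_le[OF assms] in auto)
  then show "val g \<le> 1" using geo_sum1 by (simp add: sums_iff)
qed

lemma enumerate_range:
  fixes g :: "nat \<Rightarrow> nat"
  assumes "strict_mono g"
  shows "enumerate (range g) k = g k"
  using assms
proof (induction k arbitrary: g)
  case 0
  have "(LEAST n. n \<in> range g) = g 0"
  proof (rule Least_equality)
    show "g 0 \<in> range g" by simp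
    fix y assume "y \<in> range g"
    then obtain k where "y = g k" by blast
    then show "g 0 \<le> y" using 0 by (simp add: strict_mono_less_eq)
  qed
  then show ?case by (simp add: enumerate_0)
next
  case (Suc k)
  have sm: "strict_mono (\<lambda>k. g (Suc k))" using Suc.prems by (simp add: strict_mono_def)
  have e0: "enumerate (range g) 0 = g 0" using Suc.prems
  proof -
    have "(LEAST n. n \<in> range g) = g 0"
    proof (rule Least_equality)
      show "g 0 \<in> range g" by simp
      fix y assume "y \<in> range g"
      then obtain k where "y = g k" by blast
      then show "g 0 \<le> y" using Suc.prems by (simp add: strict_mono_less_eq)
    qed
    then show ?thesis by (simp add: enumerate_0)
  qed
  have "range g - {g 0} = range (\<lambda>k. g (Suc k))"
  proof (intro set_eqI iffI)
    fix y assume "y \<in> range g - {g 0}"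
    then obtain k where k: "y = g k" "k \<noteq> 0" by auto
    then obtain j where "k = Suc j" by (cases k) auto
    then show "y \<in> range (\<lambda>k. g (Suc k))" using k by auto
  next
    fix y assume "y \<in> range (\<lambda>k. g (Suc k))"
    then obtain k where k: "y = g (Suc k)" by auto
    have "g 0 < g (Suc k)" using Suc.prems by (simp add: strict_mono_def)
    then show "y \<in> range g - {g 0}" using k by auto
  qed
  then show ?case
    unfolding enumerate_Suc' e0 using Suc.IH[OF sm] by simp
qed

definition ind :: "(nat \<Rightarrow> nat) \<Rightarrow> nat \<Rightarrow> nat" where
  "ind g n = (if n \<in> range g then 1 else 0)"

lemma reindex_sum:
  fixes b :: "nat \<Rightarrow> nat" and g :: "nat \<Rightarrow> nat"
  assumes sm: "strict_mono g" and g0: "g 0 \<ge> 1"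
    and rg: "range g = {n. n \<ge> 1 \<and> b n = 1}"
    and bw: "binary_word b"
  shows "(\<lambda>k. 1 / 2 ^ g k :: real) sums s \<longleftrightarrow> (\<lambda>n. real (b (Suc n)) / 2 ^ Suc n) sums s"
proof -
  define h where "h k = g k - 1" for k
  have ge1: "g k \<ge> 1" for k using g0 sm by (metis le_trans strict_mono_less_eq zero_le)
  have hs: "Suc (h k) = g k" for k using ge1[of k] by (simp add: h_def)
  have smh: "strict_mono h" unfolding strict_mono_def
  proof (intro allI impI)
    fix m n :: nat assume "m < n"
    then have "g m < g n" using sm by (simp add: strict_mono_def)
    then show "h m < h n" using hs[of m] hs[of n] by simp
  qed
  have z: "real (b (Suc n)) / 2 ^ Suc n = 0" if "n \<notin> range h" for n
  proof -
    have "Suc n \<notin> range g"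
    proof
      assume "Suc n \<in> range g"
      then obtain k where "Suc n = g k" by auto
      then have "n = h k" using hs[of k] by simp
      then show False using that by auto
    qed
    then have "b (Suc n) \<noteq> 1" using rg by auto
    moreover have "b (Suc n) \<in> {0,1}" using bw unfolding binary_word_def by blast
    ultimately show ?thesis by simp
  qed
  have v: "real (b (Suc (h k))) / 2 ^ Suc (h k) = 1 / 2 ^ g k" for k
  proof -
    have "g k \<in> range g" by simp
    then have "b (g k) = 1" using rg by auto
    then show ?thesis using hs[of k] by simp
  qed
  show ?thesis
    using sums_mono_reindex[OF smh, of "\<lambda>n. real (b (Suc n)) / 2 ^ Suc n" s] z v by simp
qed

lemma ones_ind: assumes "adm g" shows "{n. n \<ge> 1 \<and> ind g n = 1} = range g"
proof -
  have "n \<ge> 1" if "n \<in> range g" for n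
  proof -
    obtain k where "n = g k" using \<open>n \<in> range g\<close> by blast
    then show ?thesis using adm_ge[OF assms, of k] by simp
  qed
  then show ?thesis by (auto simp: ind_def)
qed

lemma bw_ind: assumes "adm g" shows "binary_word (ind g)"
proof -
  have "g k \<noteq> 0" for k using adm_ge[OF assms, of k] by simp
  then have "0 \<notin> range g" by (metis imageE)
  then show ?thesis by (auto simp: binary_word_def ind_def)
qed

lemma beta_val: assumes "adm g" shows "beta_pred (val g) (ind g)"
proof -
  have sm: "strict_mono g" and g0: "g 0 \<ge> 1" using assms by (auto simp: adm_def)
  have inf: "infinite (range g)" using range_inj_infinite[OF strict_mono_imp_inj_on[OF sm]] .
  have "(\<lambda>k. 1 / 2 ^ g k :: real) sums val g"
    unfolding val_def using adm_summable[OF assms] by (simp add: summable_sums)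
  then have "(\<lambda>n. real (ind g (Suc n)) / 2 ^ Suc n) sums val g"
    using reindex_sum[OF sm g0 ones_ind[OF assms, symmetric] bw_ind[OF assms]] by simp
  then show ?thesis unfolding beta_pred_def using bw_ind[OF assms] ones_ind[OF assms] inf
    by (simp add: sums_iff)
qed

lemma pos_val: assumes "adm g" shows "pos (val g) = g"
proof -
  have "beta (val g) = ind g" by (rule beta_eq[OF beta_val[OF assms]])
  then show ?thesis unfolding pos_def ones_def using ones_ind[OF assms] enumerate_range assms
    by (auto simp: adm_def)
qed

lemma pos_props:
  assumes "0 < x" "x \<le> 1"
  shows "adm (pos x)" "val (pos x) = x" "range (pos x) = ones (beta x)"
proof -
  have bp: "beta_pred x (beta x)" by (rule beta_pred_beta[OF assms])
  then have inf: "infinite (ones (beta x))" and bw: "binary_word (beta x)"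
    and sx: "(\<lambda>n. real (beta x (Suc n)) / 2 ^ Suc n) sums x"
    using bw_summable by (auto simp: beta_pred_def ones_def sums_iff)
  have sm: "strict_mono (pos x)" unfolding pos_def by (rule strict_mono_enumerate[OF inf])
  show rg: "range (pos x) = ones (beta x)" unfolding pos_def by (rule range_enumerate[OF inf])
  have "pos x 0 \<in> ones (beta x)" using rg by auto
  then have g0: "pos x 0 \<ge> 1" by (simp add: ones_def)
  show "adm (pos x)" using sm g0 by (simp add: adm_def)
  have "(\<lambda>k. 1 / 2 ^ pos x k :: real) sums x"
    using reindex_sum[OF sm g0 rg[unfolded ones_def] bw] sx by simp
  then show "val (pos x) = x" by (simp add: val_def sums_iff)
qed

lemma R_pos:
  assumes "0 < x" "x \<le> 1"
  shows "R x = Rv (pos x)"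
proof -
  have e: "real (if P then 1 else (0::nat)) = (if P then 1 else 0)" for P by simp
  show ?thesis using assms unfolding R_def Rv_def rho_def pos_def ones_def by (simp add: e)
qed

lemma R_val: assumes "adm g" shows "R (val g) = Rv g"
  using R_pos[OF val_bounds[OF assms]] pos_val[OF assms] by simp



lemma Rv_summable': "summable (\<lambda>k. (if P k then 1 else 0) / 2 ^ Suc k :: real)"
  by (rule summable_comparison_test'[OF geo_sum1[THEN sums_summable]]) auto

lemma rec_lemma:
  assumes a: "adm g"
  defines "g' \<equiv> (\<lambda>k. g (Suc k) - g 0)"
  shows "adm g'" "val g = (1 + val g') / 2 ^ g 0"
    "Rv g = (if even (g 0) then 1/2 + Rv g' / 2 else 1/2 - Rv g' / 2)"
proof -
  have sm: "strict_mono g" using a by (simp add: adm_def)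
  have lt: "g 0 < g (Suc k)" for k using sm by (simp add: strict_mono_def)
  have gs: "g (Suc k) = g' k + g 0" for k using lt[of k] by (simp add: g'_def)
  show ad: "adm g'" unfolding adm_def strict_mono_def
  proof (intro conjI allI impI)
    fix m n :: nat assume "m < n"
    then have "g (Suc m) < g (Suc n)" using sm by (simp add: strict_mono_def)
    then show "g' m < g' n" using gs[of m] gs[of n] by simp
  next
    show "g' 0 \<ge> 1" using lt[of 0] by (simp add: g'_def)
  qed
  have s1: "summable (\<lambda>k. 1 / 2 ^ g k :: real)" by (rule adm_summable[OF a])
  have "val g = 1 / 2 ^ g 0 + (\<Sum>k. 1 / 2 ^ g (Suc k))"
    unfolding val_def using suminf_split_head[OF s1] by simp
  also have "(\<lambda>k. 1 / 2 ^ g (Suc k) :: real) = (\<lambda>k. (1 / 2 ^ g 0) * (1 / 2 ^ g' k))"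
    by (rule ext) (simp add: gs power_add)
  also have "(\<Sum>k. (1 / 2 ^ g 0) * (1 / 2 ^ g' k :: real)) = (1 / 2 ^ g 0) * val g'"
    unfolding val_def by (rule suminf_mult[OF adm_summable[OF ad]])
  finally show "val g = (1 + val g') / 2 ^ g 0" by (simp add: field_simps)
  let ?p = "\<lambda>h k. (if even (h k) then 1 else 0) / 2 ^ Suc k :: real"
  have "Rv g = ?p g 0 + (\<Sum>k. ?p g (Suc k))"
    unfolding Rv_def using suminf_split_head[OF Rv_summable[of g]] by simp
  also have "(\<Sum>k. ?p g (Suc k)) = (if even (g 0) then Rv g' / 2 else 1/2 - Rv g' / 2)"
  proof (cases "even (g 0)")
    case True
    have "(\<lambda>k. ?p g (Suc k)) = (\<lambda>k. (1/2) * ?p g' k)"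
      by (rule ext) (simp add: gs True)
    then have "(\<Sum>k. ?p g (Suc k)) = (\<Sum>k. (1/2) * ?p g' k)"
      by (rule arg_cong[where f=suminf])
    also have "\<dots> = (1/2) * Rv g'"
      unfolding Rv_def by (rule suminf_mult[OF Rv_summable])
    finally have "(\<Sum>k. ?p g (Suc k)) = (1/2) * Rv g'" .
    then show ?thesis using True by simp
  next
    case False
    have "(\<lambda>k. ?p g (Suc k)) = (\<lambda>k. (1/2) * (1 / 2 ^ Suc k - ?p g' k))"
      by (rule ext) (simp add: gs False)
    moreover have "(\<Sum>k. (1/2) * (1 / 2 ^ Suc k - ?p g' k)) = (1/2) * (1 - Rv g')"
    proof -
      have "(\<Sum>k. (1 / 2 ^ Suc k - ?p g' k)) = (\<Sum>k. 1 / 2 ^ Suc k) - (\<Sum>k. ?p g' k)"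
        by (rule suminf_diff[OF geo_sum1[THEN sums_summable] Rv_summable, symmetric])
      also have "\<dots> = 1 - Rv g'" using geo_sum1 by (simp add: sums_iff Rv_def)
      finally show ?thesis
        using suminf_mult[OF summable_diff[OF geo_sum1[THEN sums_summable] Rv_summable[of g']], of "1/2"]
        by simp
    qed
    ultimately show ?thesis using False by (simp add: algebra_simps)
  qed
  finally show "Rv g = (if even (g 0) then 1/2 + Rv g' / 2 else 1/2 - Rv g' / 2)" by simp
qed

lemma shift_lemma:
  fixes K :: nat
  assumes a: "adm g"
  defines "h \<equiv> (\<lambda>k. if k < K then g k else g k + 2)"
  shows "adm h" "Rv h = Rv g" "0 < val g - val h" "val g - val h \<le> 1 / 2 ^ K"
proof -
  have sm: "strict_mono g" using a by (simp add: adm_def)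
  show ah: "adm h" unfolding adm_def strict_mono_def
  proof (intro conjI allI impI)
    fix m n :: nat assume "m < n"
    then have "g m < g n" using sm by (simp add: strict_mono_def)
    then show "h m < h n" unfolding h_def using \<open>m < n\<close> by auto
  next
    show "h 0 \<ge> 1" using a by (simp add: h_def adm_def)
  qed
  have ev: "even (h k) \<longleftrightarrow> even (g k)" for k by (simp add: h_def)
  show "Rv h = Rv g" by (simp only: Rv_def ev)
  define d :: "nat \<Rightarrow> real" where "d k = 1 / 2 ^ g k - 1 / 2 ^ h k" for k
  have e: "val g - val h = suminf d"
    unfolding val_def d_def by (rule suminf_diff[OF adm_summable[OF a] adm_summable[OF ah]])
  have d0: "d k = 0" if "k < K" for k using that by (simp add: d_def h_def)
  have dge: "d k \<ge> 0" for k
    unfolding d_def h_def using inv_pow_mono[of "g k" "g k + 2"] by auto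
  have dle: "\<bar>d k\<bar> \<le> 1 / 2 ^ Suc k" for k
  proof -
    have "d k \<le> 1 / 2 ^ g k" by (simp add: d_def)
    then show ?thesis using dge[of k] adm_le[OF a, of k] by simp
  qed
  show "val g - val h \<le> 1 / 2 ^ K" using tail_bound(2)[of K d, OF d0 dle] e by simp
  have "0 < suminf d"
  proof (rule suminf_pos2[OF tail_bound(1)[of K d, OF d0 dle] dge])
    show "0 < d K" by (simp add: d_def h_def)
  qed
  then show "0 < val g - val h" using e by simp
qed

lemma even_series: "(\<lambda>k. (if even k then 1 else 0) / 2 ^ Suc k :: real) sums (2/3)"
proof -
  have sm: "strict_mono (\<lambda>j::nat. 2 * j)" by (simp add: strict_mono_def)
  have "(\<lambda>j. (1/2) * (1/4::real) ^ j) sums ((1/2) * (1 / (1 - 1/4)))"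
    by (intro sums_mult geometric_sums) simp
  then have "(\<lambda>j. (if even (2*j) then 1 else 0) / 2 ^ Suc (2 * j) :: real) sums (2/3)"
    by (simp add: power_mult power_divide)
  then show ?thesis
    by (subst sums_mono_reindex[OF sm, symmetric]) auto
qed

lemma zero_points:
  "adm (\<lambda>k. k + 2 + 2 * K)" "Rv (\<lambda>k. k + 2 + 2 * K) = 2/3"
  "0 < val (\<lambda>k. k + 2 + 2 * K)" "val (\<lambda>k. k + 2 + 2 * K) \<le> 1 / 2 ^ K"
proof -
  show a: "adm (\<lambda>k. k + 2 + 2 * K)" by (simp add: adm_def strict_mono_def)
  show "Rv (\<lambda>k. k + 2 + 2 * K) = 2/3" using even_series by (simp add: Rv_def sums_iff)
  show "0 < val (\<lambda>k. k + 2 + 2 * K)" by (rule val_bounds(1)[OF a])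
  have "(\<lambda>k. 1 / 2 ^ (k + 2 + 2 * K) :: real) = (\<lambda>k. (1 / 2 ^ (2 * K + 1)) * (1 / 2 ^ Suc k))"
    by (rule ext) (simp add: power_add field_simps)
  then have "val (\<lambda>k. k + 2 + 2 * K) = 1 / 2 ^ (2 * K + 1)"
    unfolding val_def using sums_mult[OF geo_sum1, of "1 / 2 ^ (2 * K + 1)"] by (simp add: sums_iff)
  also have "\<dots> \<le> 1 / 2 ^ K" by (rule inv_pow_mono) simp
  finally show "val (\<lambda>k. k + 2 + 2 * K) \<le> 1 / 2 ^ K" .
qed

lemma preimage_exists:
  assumes "0 \<le> y" "y \<le> 1"
  shows "\<exists>g. adm g \<and> Rv g = y"
proof -
  define c where "c k = (if y = 0 then 0 else beta y (Suc k))" for k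
  have c01: "c k \<le> 1" for k
  proof (cases "y = 0")
    case False
    then have "binary_word (beta y)" using beta_pred_beta[of y] assms by (simp add: beta_pred_def)
    then show ?thesis using bw_le1 False by (simp add: c_def)
  qed (simp add: c_def)
  have cs: "(\<lambda>k. real (c k) / 2 ^ Suc k) sums y"
  proof (cases "y = 0")
    case True then show ?thesis by (simp add: c_def)
  next
    case False
    then have "beta_pred y (beta y)" using beta_pred_beta[of y] assms by simp
    then have "binary_word (beta y)" "(\<Sum>n. real (beta y (Suc n)) / 2 ^ Suc n) = y"
      by (auto simp: beta_pred_def)
    then show ?thesis using False bw_summable by (simp add: c_def sums_iff)
  qed
  define g where "g k = 2 * k + 3 - c k" for k
  have ag: "adm g" unfolding adm_def strict_mono_def
  proof (intro conjI allI impI)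
    fix m n :: nat assume "m < n"
    then show "g m < g n" using c01[of m] c01[of n] by (simp add: g_def)
  next
    show "g 0 \<ge> 1" using c01[of 0] by (simp add: g_def)
  qed
  have "(if even (g k) then 1 else 0) = real (c k)" for k
  proof -
    have "c k = 0 \<or> c k = 1" using c01[of k] by auto
    then show ?thesis by (auto simp: g_def)
  qed
  then have "Rv g = y" using cs by (simp add: Rv_def sums_iff)
  then show ?thesis using ag by blast
qed



lemma enum0_agree:
  fixes S S' :: "nat set"
  assumes "infinite S" "\<And>n. n \<le> N \<Longrightarrow> n \<in> S \<longleftrightarrow> n \<in> S'"
    and "enumerate S 0 \<le> N"
  shows "enumerate S' 0 = enumerate S 0"
proof -
  let ?m = "LEAST n. n \<in> S"
  have mS: "?m \<in> S" using enumerate_in_set[OF assms(1), of 0] by (simp add: enumerate_0)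
  have mN: "?m \<le> N" using assms(3) by (simp add: enumerate_0)
  have "(LEAST n. n \<in> S') = ?m"
  proof (rule Least_equality)
    show "?m \<in> S'" using mS mN assms(2) by blast
    fix j assume j: "j \<in> S'"
    show "?m \<le> j"
    proof (rule ccontr)
      assume "\<not> ?m \<le> j"
      then have "j < ?m" by simp
      then have "j \<in> S" using j mN assms(2)[of j] by simp
      then have "?m \<le> j" by (rule Least_le)
      then show False using \<open>j < ?m\<close> by simp
    qed
  qed
  then show ?thesis by (simp add: enumerate_0)
qed

lemma enum_agree:
  fixes S S' :: "nat set"
  assumes "infinite S" "infinite S'" "\<And>n. n \<le> N \<Longrightarrow> n \<in> S \<longleftrightarrow> n \<in> S'"
    and "enumerate S k \<le> N"
  shows "enumerate S' k = enumerate S k"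
  using assms
proof (induction k arbitrary: S S')
  case 0
  then show ?case using enum0_agree by blast
next
  case (Suc k)
  have e0le: "enumerate S 0 \<le> N"
    using Suc.prems(4) enumerate_mono[of 0 "Suc k" S, OF _ Suc.prems(1)] by simp
  have e0: "enumerate S' 0 = enumerate S 0"
    by (rule enum0_agree[OF Suc.prems(1) Suc.prems(3) e0le])
  have "enumerate (S' - {enumerate S 0}) k = enumerate (S - {enumerate S 0}) k"
  proof (rule Suc.IH)
    show "infinite (S - {enumerate S 0})" using Suc.prems(1) by simp
    show "infinite (S' - {enumerate S 0})" using Suc.prems(2) by simp
    show "n \<in> S - {enumerate S 0} \<longleftrightarrow> n \<in> S' - {enumerate S 0}" if "n \<le> N" for n
      using Suc.prems(3)[OF that] by blast
    show "enumerate (S - {enumerate S 0}) k \<le> N" using Suc.prems(4) by (simp only: enumerate_Suc')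
  qed
  then show ?case by (simp only: enumerate_Suc' e0)
qed

lemma R_cont:
  assumes z: "0 < z" "z < 1" and nd: "\<And>n::nat. 2 ^ n * z \<notin> \<int>"
  shows "\<exists>d>0. \<forall>x. 0 < x \<and> x \<le> 1 \<and> \<bar>x - z\<bar> < d \<longrightarrow> \<bar>R x - R z\<bar> \<le> 1 / 2 ^ K"
proof -
  define N where "N = pos z K"
  have ev: "\<forall>\<^sub>F x in at z. \<forall>m\<in>{..N}. \<lceil>2 ^ m * x\<rceil> = \<lceil>2 ^ m * z\<rceil>"
  proof (rule eventually_ball_finite)
    show "finite {..N}" by simp
    show "\<forall>m\<in>{..N}. \<forall>\<^sub>F x in at z. \<lceil>2 ^ m * x\<rceil> = \<lceil>2 ^ m * z\<rceil>"
    proof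
      fix m :: nat
      have "((\<lambda>x. 2 ^ m * x) \<longlongrightarrow> 2 ^ m * z) (at z)"
        by (intro tendsto_intros)
      then show "\<forall>\<^sub>F x in at z. \<lceil>2 ^ m * x\<rceil> = \<lceil>2 ^ m * z\<rceil>"
        by (rule eventually_ceiling_eq) (rule nd)
    qed
  qed
  then obtain d where d: "d > 0"
    and dP: "\<And>x. x \<noteq> z \<Longrightarrow> dist x z < d \<Longrightarrow> \<forall>m\<in>{..N}. \<lceil>2 ^ m * x\<rceil> = \<lceil>2 ^ m * z\<rceil>"
    unfolding eventually_at by blast
  have main: "\<bar>R x - R z\<bar> \<le> 1 / 2 ^ K" if x: "0 < x" "x \<le> 1" "\<bar>x - z\<bar> < d" for x
  proof -
    have ceq: "\<lceil>2 ^ m * x\<rceil> = \<lceil>2 ^ m * z\<rceil>" if "m \<le> N" for m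
    proof (cases "x = z")
      case False
      then show ?thesis using dP[of x] x(3) that by (simp add: dist_real_def)
    qed simp
    have beq: "beta x n = beta z n" if "n \<le> N" for n
    proof (cases n)
      case 0
      then show ?thesis using beta_pred_beta[of x] beta_pred_beta[of z] x z
        by (simp add: beta_pred_def binary_word_def)
    next
      case (Suc m)
      have "real (beta x (Suc m)) = real (beta z (Suc m))"
        using beta_digit[of x m] beta_digit[of z m] x z ceq[of m] ceq[of "Suc m"] that Suc by simp
      then show ?thesis using Suc by simp
    qed
    have infx: "infinite (ones (beta x))" and infz: "infinite (ones (beta z))"
      using beta_pred_beta[of x] beta_pred_beta[of z] x z by (auto simp: beta_pred_def ones_def)
    have pk: "pos x k = pos z k" if "k < K" for k
    proof -
      have "pos z k \<le> N" unfolding N_def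
        using strict_mono_less_eq[OF pos_props(1)[of z, unfolded adm_def, THEN conjunct1]] z that
        by simp
      then show ?thesis unfolding pos_def
        by (intro enum_agree[OF infz infx]) (auto simp: ones_def beq)
    qed
    define f :: "nat \<Rightarrow> real" where "f k = (if even (pos x k) then 1 else 0) / 2 ^ Suc k - (if even (pos z k) then 1 else 0) / 2 ^ Suc k" for k
    have f0: "f k = 0" if "k < K" for k using pk[OF that] by (simp add: f_def)
    have fb: "\<bar>f k\<bar> \<le> 1 / 2 ^ Suc k" for k by (simp add: f_def)
    have "R x - R z = suminf f"
      unfolding R_pos[OF x(1,2)] R_pos[of z, OF z(1) less_imp_le[OF z(2)]] Rv_def f_def
      by (rule suminf_diff[OF Rv_summable Rv_summable])
    then show ?thesis using tail_bound(2)[of K f, OF f0 fb] by simp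
  qed
  show ?thesis using d main by blast
qed



lemma aff_meas0: "(\<lambda>x::real. -1 + 2 ^ n * x) \<in> borel_measurable borel"
  by measurable

lemma aff_meas: "(\<lambda>x::real. 2 ^ n * x - 1) \<in> borel_measurable borel"
  by measurable

lemma pre_sets: assumes "C \<in> sets borel"
  shows "(\<lambda>x::real. 2 ^ n * x - 1) -` C \<in> sets borel"
  using measurable_sets[OF aff_meas assms] by simp

lemma emeasure_pre:
  assumes C: "C \<in> sets borel"
  shows "emeasure lborel ((\<lambda>x::real. 2 ^ n * x - 1) -` C) = ennreal (1 / 2 ^ n) * emeasure lborel C"
proof -
  have fe: "(\<lambda>x::real. 2 ^ n * x - 1) = (\<lambda>x::real. -1 + 2 ^ n * x)" by auto
  let ?f = "\<lambda>x::real. -1 + 2 ^ n * x"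
  have L: "lborel = density (distr lborel borel ?f) (\<lambda>_. ennreal \<bar>2 ^ n\<bar>)"
    by (rule lborel_real_affine) simp
  have "emeasure lborel C = emeasure (density (distr lborel borel ?f) (\<lambda>_. ennreal \<bar>2 ^ n\<bar>)) C"
    using L by (rule arg_cong[where f="\<lambda>M. emeasure M C"])
  also have "\<dots> = (\<integral>\<^sup>+ x. ennreal (2 ^ n) * indicator C x \<partial>(distr lborel borel ?f))"
    by (subst emeasure_density) (use C in auto)
  also have "\<dots> = ennreal (2 ^ n) * emeasure (distr lborel borel ?f) C"
    by (rule nn_integral_cmult_indicator) (use C in simp)
  also have "emeasure (distr lborel borel ?f) C = emeasure lborel (?f -` C)"
    by (subst emeasure_distr[OF _ C]) (auto simp: aff_meas0)
  finally have e: "emeasure lborel C = ennreal (2 ^ n) * emeasure lborel (?f -` C)" .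
  have "ennreal (1 / 2 ^ n) * emeasure lborel C = (ennreal (1 / 2 ^ n) * ennreal (2 ^ n)) * emeasure lborel (?f -` C)"
    unfolding e by (simp add: mult.assoc)
  also have "ennreal (1 / 2 ^ n) * ennreal (2 ^ n) = 1"
    by (simp add: ennreal_mult[symmetric])
  finally show ?thesis unfolding fe by simp
qed

definition Aset :: "real \<Rightarrow> nat set" where
  "Aset y = {n. n \<ge> 1 \<and> (even n \<longrightarrow> 1/2 \<le> y) \<and> (odd n \<longrightarrow> y \<le> 1/2)}"

fun Cov :: "nat \<Rightarrow> real \<Rightarrow> real set" where
  "Cov 0 y = (if 0 \<le> y \<and> y \<le> 1 then {0..1} else {})"
| "Cov (Suc K) y = (\<Union>n. if n \<in> Aset y then (\<lambda>x. 2 ^ n * x - 1) -` Cov K \<bar>2 * y - 1\<bar> else {})"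

lemma Cov_sets: "Cov K y \<in> sets borel"
proof (induction K arbitrary: y)
  case 0 then show ?case by simp
next
  case (Suc K)
  have "(if n \<in> Aset y then (\<lambda>x::real. 2 ^ n * x - 1) -` Cov K \<bar>2 * y - 1\<bar> else {}) \<in> sets borel" for n
    using pre_sets[OF Suc.IH] by simp
  then have "range (\<lambda>n. if n \<in> Aset y then (\<lambda>x::real. 2 ^ n * x - 1) -` Cov K \<bar>2 * y - 1\<bar> else {}) \<subseteq> sets borel"
    by blast
  then show ?case by (simp only: Cov.simps) (rule sets.countable_UN)
qed

definition aco :: "real \<Rightarrow> nat \<Rightarrow> real" where
  "aco y n = (if n \<in> Aset y then 1 / 2 ^ n else 0)"

lemma aco_nonneg: "0 \<le> aco y n" by (simp add: aco_def)

lemma aco_le: "aco y (Suc m) \<le> 1 / 2 ^ Suc m" by (simp add: aco_def)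

lemma aco_summable: "summable (aco y)"
proof -
  have "summable (\<lambda>m. aco y (Suc m))"
    by (rule summable_comparison_test'[OF geo_sum1[THEN sums_summable]]) (use aco_le aco_nonneg in auto)
  then show ?thesis by (simp add: summable_Suc_iff)
qed

lemma aco_sum_shift: "suminf (aco y) = (\<Sum>m. aco y (Suc m))"
  using suminf_split_head[OF aco_summable[of y]] by (simp add: aco_def Aset_def)

lemma aco_bound1: "suminf (aco y) \<le> 1"
proof -
  have "(\<Sum>m. aco y (Suc m)) \<le> (\<Sum>m. 1 / 2 ^ Suc m)"
    by (rule suminf_le[OF aco_le _ geo_sum1[THEN sums_summable]]) (simp add: summable_Suc_iff aco_summable)
  then show ?thesis using geo_sum1 aco_sum_shift[of y] by (simp add: sums_iff)
qed

lemma aco_bound2: assumes "y \<noteq> 1/2" shows "suminf (aco y) \<le> 2/3"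
proof -
  let ?e = "\<lambda>m. (if even m then 1 else 0) / 2 ^ Suc m :: real"
  let ?o = "\<lambda>m. 1 / 2 ^ Suc m - ?e m :: real"
  have es: "?e sums (2/3)" by (rule even_series)
  have os: "?o sums (1 - 2/3)" by (rule sums_diff[OF geo_sum1 es])
  have sh: "summable (\<lambda>m. aco y (Suc m))" by (simp add: summable_Suc_iff aco_summable)
  show ?thesis
  proof (cases "y < 1/2")
    case True
    have "aco y (Suc m) \<le> ?e m" for m using True by (auto simp: aco_def Aset_def)
    then have "(\<Sum>m. aco y (Suc m)) \<le> 2/3"
      using suminf_le[OF _ sh sums_summable[OF es]] es by (simp add: sums_iff)
    then show ?thesis using aco_sum_shift[of y] by simp
  next
    case False
    then have gt: "y > 1/2" using assms by simp
    have "aco y (Suc m) \<le> ?o m" for m using gt by (auto simp: aco_def Aset_def)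
    then have "(\<Sum>m. aco y (Suc m)) \<le> 1 - 2/3"
      using suminf_le[OF _ sh sums_summable[OF os]] os by (simp add: sums_iff)
    then show ?thesis using aco_sum_shift[of y] by simp
  qed
qed

lemma Cov_step: "emeasure lborel (Cov (Suc K) y) \<le> ennreal (suminf (aco y)) * emeasure lborel (Cov K \<bar>2 * y - 1\<bar>)"
proof -
  let ?M = "emeasure lborel (Cov K \<bar>2 * y - 1\<bar>)"
  let ?A = "\<lambda>n. if n \<in> Aset y then (\<lambda>x::real. 2 ^ n * x - 1) -` Cov K \<bar>2 * y - 1\<bar> else {}"
  have "range ?A \<subseteq> sets lborel" using pre_sets[OF Cov_sets] by auto
  then have "emeasure lborel (Cov (Suc K) y) \<le> (\<Sum>n. emeasure lborel (?A n))"
    by (simp only: Cov.simps) (rule emeasure_subadditive_countably)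
  also have "(\<lambda>n. emeasure lborel (?A n)) = (\<lambda>n. ennreal (aco y n) * ?M)"
    by (rule ext) (simp add: aco_def emeasure_pre[OF Cov_sets])
  also have "(\<Sum>n. ennreal (aco y n) * ?M) = (\<Sum>n. ennreal (aco y n)) * ?M"
    using ennreal_suminf_cmult[of ?M "\<lambda>n. ennreal (aco y n)"] by (simp add: mult.commute)
  also have "(\<Sum>n. ennreal (aco y n)) = ennreal (suminf (aco y))"
    by (rule suminf_ennreal2[OF aco_nonneg aco_summable])
  finally show ?thesis .
qed

lemma Cov_01: assumes "y = 0 \<or> y = 1" shows "emeasure lborel (Cov K y) \<le> ennreal ((2/3) ^ K)"
  using assms
proof (induction K arbitrary: y)
  case 0
  then show ?case by auto
next
  case (Suc K)
  have t: "\<bar>2 * y - 1\<bar> = 1" using Suc.prems by auto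
  have "emeasure lborel (Cov (Suc K) y) \<le> ennreal (suminf (aco y)) * ennreal ((2/3) ^ K)"
    by (rule order_trans[OF Cov_step[of K y]], rule mult_left_mono) (use Suc.IH[of 1] t in auto)
  also have "\<dots> \<le> ennreal (2/3) * ennreal ((2/3) ^ K)"
    using aco_bound2[of y] Suc.prems by (intro mult_right_mono ennreal_leI) auto
  also have "\<dots> = ennreal ((2/3) ^ Suc K)" by (simp add: ennreal_mult[symmetric])
  finally show ?case .
qed

lemma Cov_all: "emeasure lborel (Cov K y) \<le> ennreal (3/2 * (2/3) ^ K)"
proof (induction K arbitrary: y)
  case 0
  have "emeasure lborel (Cov 0 y) \<le> 1" by auto
  then show ?case by (simp add: order_trans)
next
  case (Suc K)
  show ?case
  proof (cases "y = 1/2")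
    case True
    have t: "\<bar>2 * y - 1\<bar> = 0" using True by simp
    have "emeasure lborel (Cov (Suc K) y) \<le> ennreal (suminf (aco y)) * ennreal ((2/3) ^ K)"
      by (rule order_trans[OF Cov_step[of K y]], rule mult_left_mono) (use Cov_01[of 0 K] t in auto)
    also have "\<dots> \<le> ennreal 1 * ennreal ((2/3) ^ K)"
      using aco_bound1[of y] by (intro mult_right_mono ennreal_leI) auto
    also have "\<dots> = ennreal (3/2 * (2/3) ^ Suc K)" by simp
    finally show ?thesis .
  next
    case False
    have "emeasure lborel (Cov (Suc K) y) \<le> ennreal (suminf (aco y)) * ennreal (3/2 * (2/3) ^ K)"
      by (rule order_trans[OF Cov_step[of K y]], rule mult_left_mono) (use Suc.IH[of "\<bar>2 * y - 1\<bar>"] in auto)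
    also have "\<dots> \<le> ennreal (2/3) * ennreal (3/2 * (2/3) ^ K)"
      using aco_bound2[OF False] by (intro mult_right_mono ennreal_leI) auto
    also have "\<dots> = ennreal (3/2 * (2/3) ^ Suc K)" by (simp add: ennreal_mult[symmetric])
    finally show ?thesis .
  qed
qed

lemma val_Cov: assumes "adm g" shows "val g \<in> Cov K (Rv g)"
  using assms
proof (induction K arbitrary: g)
  case 0
  then show ?case using Rv_bounds[of g] val_bounds[OF 0] by simp
next
  case (Suc K)
  define g' where "g' = (\<lambda>k. g (Suc k) - g 0)"
  have ad: "adm g'" and v: "val g = (1 + val g') / 2 ^ g 0"
    and r: "Rv g = (if even (g 0) then 1/2 + Rv g' / 2 else 1/2 - Rv g' / 2)"
    using rec_lemma[OF Suc.prems] unfolding g'_def by auto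
  have v': "2 ^ g 0 * val g - 1 = val g'" using v by (simp add: field_simps)
  have t: "\<bar>2 * Rv g - 1\<bar> = Rv g'" using r Rv_bounds[of g'] by (auto split: if_splits)
  have n: "g 0 \<in> Aset (Rv g)"
    using Suc.prems r Rv_bounds[of g'] by (auto simp: Aset_def adm_def)
  have "val g' \<in> Cov K (Rv g')" by (rule Suc.IH[OF ad])
  then show ?case using n v' t by (simp only: Cov.simps) (intro UN_I[of "g 0"], auto)
qed



lemma small_pow: assumes "0 < (e::real)" shows "\<exists>K. 1 / 2 ^ K < e"
proof -
  obtain K where "(1/2::real) ^ K < e" using real_arch_pow_inv[OF assms, of "1/2"] by auto
  then show ?thesis by (auto simp: power_divide)
qed

lemma dyadics_countable: "countable dyadics"
proof -
  have "dyadics \<subseteq> (\<lambda>(m, k). real_of_int m / 2 ^ k) ` (UNIV :: (int \<times> nat) set)"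
    unfolding dyadics_def by auto
  then show ?thesis by (rule countable_subset) simp
qed

lemma not_dyadic_nonint:
  assumes "z \<in> {0..1}" "z \<notin> dyadics"
  shows "2 ^ n * z \<notin> \<int>"
proof
  assume "2 ^ n * z \<in> \<int>"
  then obtain m where "2 ^ n * z = of_int m" by (auto elim: Ints_cases)
  then have "z = real_of_int m / 2 ^ n" by (simp add: field_simps)
  then show False using assms unfolding dyadics_def by auto
qed

lemma R_eq_limit:
  assumes z: "z \<in> closure (R -` {y} \<inter> {0..1})" "z \<in> {0..1}" "z \<notin> dyadics"
  shows "R z = y"
proof -
  have "0 \<in> dyadics" unfolding dyadics_def by (auto intro!: exI[of _ "0::int"] exI[of _ "0::nat"])
  then have z0: "z \<noteq> 0" using assms(3) by auto
  have "1 \<in> dyadics" unfolding dyadics_def by (auto intro!: exI[of _ "1::int"] exI[of _ "0::nat"])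
  then have z1: "z \<noteq> 1" using assms(3) by auto
  have zz: "0 < z" "z < 1" using z0 z1 assms(2) by auto
  have nd: "\<And>n::nat. 2 ^ n * z \<notin> \<int>" using not_dyadic_nonint[OF assms(2,3)] .
  have b: "\<bar>R z - y\<bar> \<le> 1 / 2 ^ K" for K
  proof -
    obtain d where d: "d > 0" and dP: "\<forall>x. 0 < x \<and> x \<le> 1 \<and> \<bar>x - z\<bar> < d \<longrightarrow> \<bar>R x - R z\<bar> \<le> 1 / 2 ^ K"
      using R_cont[OF zz nd, of K] by blast
    obtain x where x: "x \<in> R -` {y} \<inter> {0..1}" "dist x z < min d z"
      using z(1) unfolding closure_approachable using d zz by (meson min_less_iff_conj)
    have "0 < x" "x \<le> 1" "\<bar>x - z\<bar> < d" using x by (auto simp: dist_real_def)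
    then have "\<bar>R x - R z\<bar> \<le> 1 / 2 ^ K" using dP by blast
    then show ?thesis using x by auto
  qed
  show ?thesis
  proof (rule ccontr)
    assume "R z \<noteq> y"
    then have "0 < \<bar>R z - y\<bar>" by simp
    then obtain K where "1 / 2 ^ K < \<bar>R z - y\<bar>" using small_pow by blast
    then show False using b[of K] by simp
  qed
qed

lemma F_limpt:
  assumes x: "x \<in> R -` {y} \<inter> {0..1}"
  shows "x islimpt (R -` {y} \<inter> {0..1})"
  unfolding islimpt_approachable
proof (intro allI impI)
  fix e :: real assume e: "0 < e"
  obtain K where K: "1 / 2 ^ K < e" using small_pow[OF e] by blast
  show "\<exists>x'\<in>R -` {y} \<inter> {0..1}. x' \<noteq> x \<and> dist x' x < e"
  proof (cases "x = 0")
    case True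
    then have y: "y = 2/3" using x by (simp add: R_def)
    let ?g = "\<lambda>k. k + 2 + 2 * K"
    have a: "adm ?g" and r: "Rv ?g = 2/3" and p: "0 < val ?g" "val ?g \<le> 1 / 2 ^ K"
      using zero_points[of K] by auto
    have "R (val ?g) = y" using R_val[OF a] r y by simp
    moreover have "val ?g \<le> 1" using val_bounds[OF a] by simp
    ultimately show ?thesis using p K True
      by (intro bexI[of _ "val ?g"]) (auto simp: dist_real_def)
  next
    case False
    then have x01: "0 < x" "x \<le> 1" using x by auto
    let ?g = "pos x"
    have a: "adm ?g" and vx: "val ?g = x" using pos_props[OF x01] by auto
    let ?h = "\<lambda>k. if k < K then ?g k else ?g k + 2"
    have ah: "adm ?h" and rh: "Rv ?h = Rv ?g" and d1: "0 < val ?g - val ?h"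
      and d2: "val ?g - val ?h \<le> 1 / 2 ^ K"
      using shift_lemma[OF a, of K] by auto
    have "R (val ?h) = R x" using R_val[OF ah] rh R_pos[OF x01] by simp
    then have "R (val ?h) = y" using x by simp
    moreover have "0 < val ?h" "val ?h \<le> 1" using val_bounds[OF ah] by auto
    ultimately show ?thesis using d1 d2 K vx
      by (intro bexI[of _ "val ?h"]) (auto simp: dist_real_def)
  qed
qed

theorem proposition5p3:
  fixes y :: real
  assumes "y \<in> {0..1}"
  shows "cantor_set (closure (R -` {y} \<inter> {0..1}))
       \<and> closure (R -` {y} \<inter> {0..1}) \<in> null_sets lborel
       \<and> closure (R -` {y} \<inter> {0..1}) - (R -` {y} \<inter> {0..1}) \<subseteq> dyadics
       \<and> countable (closure (R -` {y} \<inter> {0..1}) - (R -` {y} \<inter> {0..1}))"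
proof -
  define F where "F = R -` {y} \<inter> {0..1}"
  define S where "S = closure F"
  have FS: "F \<subseteq> S" unfolding S_def by (rule closure_subset)
  have S01: "S \<subseteq> {0..1}" unfolding S_def F_def by (rule closure_minimal) auto
  have rem: "S - F \<subseteq> dyadics"
  proof
    fix z assume z: "z \<in> S - F"
    show "z \<in> dyadics"
    proof (rule ccontr)
      assume nd: "z \<notin> dyadics"
      have z01: "z \<in> {0..1}" using z S01 by auto
      have "R z = y" using R_eq_limit[OF _ z01 nd] z unfolding S_def F_def by auto
      then show False using z z01 unfolding F_def by auto
    qed
  qed
  have cnt: "countable (S - F)" by (rule countable_subset[OF rem dyadics_countable])
  have Fne: "F \<noteq> {}"
  proof -
    obtain g where g: "adm g" "Rv g = y" using preimage_exists assms by auto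
    have "val g \<in> F" unfolding F_def using R_val[OF g(1)] g val_bounds[OF g(1)] by auto
    then show ?thesis by blast
  qed
  have "bounded F" by (rule bounded_subset[OF bounded_closed_interval[of 0 1]]) (use FS S01 in auto)
  then have comp: "compact S" unfolding S_def by simp
  have Ssets: "S \<in> sets lborel" unfolding S_def by simp
  have dn: "dyadics \<in> null_sets lborel" by (rule countable_imp_null_set_lborel[OF dyadics_countable])
  have cov: "S \<subseteq> dyadics \<union> Cov K y" for K
  proof
    fix x assume xS: "x \<in> S"
    show "x \<in> dyadics \<union> Cov K y"
    proof (cases "x \<in> F")
      case False then show ?thesis using rem xS by auto
    next
      case True
      show ?thesis
      proof (cases "x = 0")
        case True then show ?thesis unfolding dyadics_def by (auto intro!: exI[of _ "0::int"] exI[of _ "0::nat"])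
      next
        case False
        then have x01: "0 < x" "x \<le> 1" using \<open>x \<in> F\<close> by (auto simp: F_def)
        have a: "adm (pos x)" and vx: "val (pos x) = x" using pos_props[OF x01] by auto
        have "Rv (pos x) = y" using R_pos[OF x01] \<open>x \<in> F\<close> by (simp add: F_def)
        then show ?thesis using val_Cov[OF a, of K] vx by auto
      qed
    qed
  qed
  have mle: "emeasure lborel S \<le> ennreal (3/2 * (2/3) ^ K)" for K
  proof -
    have "emeasure lborel S \<le> emeasure lborel (dyadics \<union> Cov K y)"
      by (rule emeasure_mono[OF cov[of K]]) (use dn Cov_sets in auto)
    also have "\<dots> \<le> emeasure lborel dyadics + emeasure lborel (Cov K y)"
      by (rule emeasure_subadditive) (use dn Cov_sets in auto)
    also have "\<dots> = emeasure lborel (Cov K y)" using dn by auto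
    also have "\<dots> \<le> ennreal (3/2 * (2/3) ^ K)" by (rule Cov_all)
    finally show ?thesis .
  qed
  have "emeasure lborel S \<le> 0"
  proof (rule ennreal_le_epsilon)
    fix e :: real assume e: "0 < e"
    obtain K where K: "(2/3::real) ^ K < e * (2/3)" using real_arch_pow_inv[of "e * (2/3)" "2/3"] e by auto
    have "3/2 * (2/3::real) ^ K \<le> e" using K by simp
    then have "emeasure lborel S \<le> ennreal e" using mle[of K] by (metis ennreal_leI order_trans)
    then show "emeasure lborel S \<le> 0 + ennreal e" by simp
  qed
  then have null: "S \<in> null_sets lborel" using Ssets by (simp add: null_sets_def)
  have perf: "\<forall>x\<in>S. x islimpt S"
  proof
    fix x assume "x \<in> S"
    then have "x \<in> F \<or> x islimpt F" unfolding S_def closure_def by auto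
    then have "x islimpt F" using F_limpt unfolding F_def by auto
    then show "x islimpt S" using islimpt_subset FS by blast
  qed
  have tdisc: "\<forall>x\<in>S. connected_component_set S x = {x}"
  proof
    fix x assume xS: "x \<in> S"
    show "connected_component_set S x = {x}"
    proof (rule ccontr)
      assume ne: "connected_component_set S x \<noteq> {x}"
      have xin: "x \<in> connected_component_set S x" using xS connected_component_refl by auto
      then obtain u where u: "u \<in> connected_component_set S x" "u \<noteq> x" using ne by blast
      have cc: "connected (connected_component_set S x)" by simp
      have m1: "min x u \<in> connected_component_set S x" and m2: "max x u \<in> connected_component_set S x"
        using xin u by (auto simp: min_def max_def)
      have sub: "{min x u..max x u} \<subseteq> S"
        using connected_contains_Icc[OF cc m1 m2] connected_component_subset[of S x] by blast
      have "emeasure lborel {min x u..max x u} \<le> emeasure lborel S"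
        by (rule emeasure_mono[OF sub Ssets])
      also have "\<dots> = 0" using null by auto
      finally have "emeasure lborel {min x u..max x u} = 0" by simp
      then show False using u(2) by (auto simp: min_def max_def split: if_splits)
    qed
  qed
  have "cantor_set S" unfolding cantor_set_def using Fne FS comp perf tdisc by auto
  then show ?thesis using null rem cnt unfolding S_def F_def by auto
qed

end
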